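(* For $\eta=(\eta_1,\dots,\eta_n)\in\mathbb{Z}_{\ge0}^n$ define $$h_\eta(x;q,t)=\prod_{i=1}^nt^{(i-1)\eta_i}\frac{(t;q)_\infty(q^{\eta_i+1};q)_\infty}{(tq^{\eta_i};q)_\infty(q;q)_\infty}\prod_{i<j}\frac{(q^{\eta_i-\eta_j}x_i/x_j;q)_\infty(q^{1-\eta_j}t^{-1}x_i/x_j;q)_\infty(tx_i/x_j;q)_\infty(q^{1+\eta_i}x_i/x_j;q)_\infty}{(q^{-\eta_j}x_i/x_j;q)_\infty(qt^{-1}x_i/x_j;q)_\infty(tq^{\eta_i}x_i/x_j;q)_\infty(q^{1+\eta_i-\eta_j}x_i/x_j;q)_\infty},$$ and define the operator $\mathbf{N}_n^z=\sum_{\eta_1,\dots,\eta_n=0}^\infty z^{|\eta|}h_\eta(x;q,t)\prod_{i=1}^n(T_{q,x_i})^{\eta_i}$, where $|\eta|=\eta_1+\dots+\eta_n$ and $(T_{q,x_i}F)(x_1,\dots,x_n)=F(x_1,\dots,qx_i,\dots,x_n)$. Then $$\mathbf{N}_n^z=\sum_{\eta_1,\dots,\eta_n=0}^\infty z^{|\eta|}\prod_{i<j}\frac{q^{\eta_j}x_j-q^{\eta_i}x_i}{x_j-x_i}\prod_{i,j=1}^n\frac{(tx_i/x_j;q)_{\eta_i}}{(qx_i/x_j;q)_{\eta_i}}\prod_{i=1}^n(T_{q,x_i})^{\eta_i},$$ i.e. for every $\eta\in\mathbb{Z}_{\ge0}^n$, $h_\eta(x;q,t)=\prod_{i<j}\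frac{q^{\eta_j}x_j-q^{\eta_i}x_i}{x_j-x_i}\prod_{i,j}\frac{(tx_i/x_j;q)_{\eta_i}}{(qx_i/x_j;q)_{\eta_i}}$.
   Context: $q,t\in[0,1)$; $(a;q)_\infty=\prod_{i\ge0}(1-aq^i)$ and $(a;q)_m=(1-a)(1-aq)\cdots(1-aq^{m-1})$. The identity is between functions of the formal/complex variables $x_1,\dots,x_n$ (meromorphic functions), coefficientwise in $z$. *)

theory Defs
  imports "HOL-Analysis.Analysis"
begin

definition qpoch_inf :: "complex \<Rightarrow> complex \<Rightarrow> complex" where
  "qpoch_inf a q = prodinf (\<lambda>i. 1 - a * q ^ i)"

definition qpoch :: "complex \<Rightarrow> complex \<Rightarrow> nat \<Rightarrow> complex" where
  "qpoch a q m = (\<Prod>i<m. (1 - a * q ^ i))"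

definition pairs_lt :: "nat \<Rightarrow> (nat \<times> nat) set" where
  "pairs_lt n = {(i, j). i < j \<and> j < n}"

text \<open>The coefficient h_eta(x;q,t); variables x_1..x_n are x 0 .. x (n-1),
  so the factor t^((i-1) eta_i) becomes t^(i * eta i) with 0-based i.\<close>
definition h_eta :: "nat \<Rightarrow> (nat \<Rightarrow> nat) \<Rightarrow> (nat \<Rightarrow> complex) \<Rightarrow> real \<Rightarrow> real \<Rightarrow> complex" where
  "h_eta n \<eta> x q t =
    (let Q = complex_of_real q; T = complex_of_real t in
     (\<Prod>i<n. T ^ (i * \<eta> i) * qpoch_inf T Q * qpoch_inf (Q ^ (\<eta> i + 1)) Q
              / (qpoch_inf (T * Q ^ \<eta> i) Q * qpoch_inf Q Q)) *
     (\<Prod>(i, j)\<in>pairs_lt n.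
        qpoch_inf (Q powi (int (\<eta> i) - int (\<eta> j)) * x i / x j) Q
        * qpoch_inf (Q powi (1 - int (\<eta> j)) / T * x i / x j) Q
        * qpoch_inf (T * x i / x j) Q
        * qpoch_inf (Q ^ (1 + \<eta> i) * x i / x j) Q
      / (qpoch_inf (Q powi (- int (\<eta> j)) * x i / x j) Q
        * qpoch_inf (Q / T * x i / x j) Q
        * qpoch_inf (T * Q ^ \<eta> i * x i / x j) Q
        * qpoch_inf (Q powi (1 + int (\<eta> i) - int (\<eta> j)) * x i / x j) Q)))"

end

theory Submission
  imports Defs
begin


lemma qi_conv:
  fixes a q :: complex assumes "norm q < 1"
  shows "convergent_prod (\<lambda>i. 1 - a * q ^ i)"
proof -
  have "summable (\<lambda>i. norm a * norm q ^ i)"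
    using assms by (intro summable_mult summable_geometric) auto
  then have "summable (\<lambda>i. norm ((1 - a * q ^ i) - 1))"
    by (simp add: norm_mult norm_power)
  then show ?thesis
    by (intro abs_convergent_prod_imp_convergent_prod summable_imp_abs_convergent_prod)
qed

lemma qi_split:
  fixes a q :: complex assumes "norm q < 1"
  shows "qpoch_inf a q = qpoch a q m * qpoch_inf (a * q ^ m) q"
proof -
  have "(\<lambda>i. 1 - a * q ^ i) has_prod ((\<Prod>k<m. 1 - a * q ^ k) * (\<Prod>k. 1 - a * q ^ (k + m)))"
    by (rule has_prod_ignore_initial_segment'[OF qi_conv[OF assms]])
  moreover have "(\<lambda>k. 1 - a * q ^ (k + m)) = (\<lambda>k. 1 - a * q ^ m * q ^ k)"
    by (auto simp: power_add algebra_simps)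
  ultimately show ?thesis unfolding qpoch_inf_def qpoch_def
    using has_prod_unique by metis
qed

lemma qi_nz:
  fixes a q :: complex assumes "norm q < 1" "\<And>i. a * q ^ i \<noteq> 1"
  shows "qpoch_inf a q \<noteq> 0"
  unfolding qpoch_inf_def using assms
  by (intro prodinf_nonzero qi_conv) auto

lemma qpoch_add: "qpoch c q (m + k) = qpoch c q m * qpoch (c * q ^ m) q k"
  unfolding qpoch_def
proof (induction k)
  case 0 then show ?case by simp
next
  case (Suc k) then show ?case by (simp add: power_add mult_ac)
qed

lemma qpoch_refl:
  fixes q w :: complex assumes "w \<noteq> 0" "q \<noteq> 0"
  shows "qpoch (q / q ^ b * w) q b = (\<Prod>k<b. - w / q ^ k) * qpoch (1 / w) q b"
proof -
  have "qpoch (q / q ^ b * w) q b = (\<Prod>i<b. 1 - q / q ^ b * w * q ^ (b - Suc i))"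
    unfolding qpoch_def by (rule prod.nat_diff_reindex[symmetric])
  also have "\<dots> = (\<Prod>i<b. (- w / q ^ i) * (1 - 1 / w * q ^ i))"
  proof (rule prod.cong[OF refl])
    fix i assume "i \<in> {..<b}"
    then have "q ^ b = q * q ^ i * q ^ (b - Suc i)"
      by (metis Suc_leI le_add_diff_inverse lessThan_iff power_Suc power_add)
    then have "q / q ^ b * q ^ (b - Suc i) = 1 / q ^ i"
      using assms by (simp add: field_simps)
    then show "1 - q / q ^ b * w * q ^ (b - Suc i) = (- w / q ^ i) * (1 - 1 / w * q ^ i)"
      using assms by (simp add: field_simps)
  qed
  also have "\<dots> = (\<Prod>k<b. - w / q ^ k) * qpoch (1 / w) q b"
    unfolding qpoch_def by (rule prod.distrib)
  finally show ?thesis .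
qed

lemma prodP:
  fixes q w t :: complex assumes "t \<noteq> 0"
  shows "(\<Prod>k<b. - (w / t) / q ^ k) * t ^ b = (\<Prod>k<b. - w / q ^ k)"
proof -
  have "(\<Prod>k<b. - (w / t) / q ^ k) * t ^ b = (\<Prod>k<b. - (w / t) / q ^ k) * (\<Prod>k<b. t)"
    by simp
  also have "\<dots> = (\<Prod>k<b. (- (w / t) / q ^ k) * t)"
    by (rule prod.distrib[symmetric])
  also have "\<dots> = (\<Prod>k<b. - w / q ^ k)" using assms by (intro prod.cong) auto
  finally show ?thesis .
qed

lemma pair_u:
  fixes q t u c :: complex
  assumes q0: "q \<noteq> 0" and qn: "norm q < 1" and t0: "t \<noteq> 0" and u0: "u \<noteq> 0" and u1: "u \<noteq> 1"
    and c: "c * q ^ b = 1"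
    and h1: "qpoch_inf (c*u) q \<noteq> 0" and h2: "qpoch_inf (q/t*u) q \<noteq> 0"
    and h3: "qpoch_inf (t*q^a*u) q \<noteq> 0" and h4: "qpoch_inf (c*q^(a+1)*u) q \<noteq> 0"
    and h5: "qpoch (q*u) q a \<noteq> 0" and h6: "qpoch (q/u) q b \<noteq> 0"
  shows "qpoch_inf (c*q^a*u) q * qpoch_inf (c*q/t*u) q * qpoch_inf (t*u) q * qpoch_inf (q^(a+1)*u) q
     / (qpoch_inf (c*u) q * qpoch_inf (q/t*u) q * qpoch_inf (t*q^a*u) q * qpoch_inf (c*q^(a+1)*u) q)
   = (q^b - q^a*u)/(1-u) * (qpoch (t*u) q a / qpoch (q*u) q a) * (qpoch (t/u) q b / qpoch (q/u) q b) / t^b"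
proof -
  have cq: "c = 1 / q ^ b" using c q0 by (simp add: field_simps)
  have s1: "qpoch_inf (c*u) q = qpoch (c*u) q a * qpoch_inf (c*q^a*u) q"
    using qi_split[OF qn, of "c*u" a] by (simp add: mult_ac)
  have s2: "qpoch_inf (c*q/t*u) q = qpoch (c*q/t*u) q b * qpoch_inf (q/t*u) q"
  proof -
    have e: "c*q/t*u*q^b = q/t*u" using c t0 by (simp add: field_simps)
    show ?thesis using qi_split[OF qn, of "c*q/t*u" b] unfolding e .
  qed
  have s3: "qpoch_inf (t*u) q = qpoch (t*u) q a * qpoch_inf (t*q^a*u) q"
    using qi_split[OF qn, of "t*u" a] by (simp add: mult_ac)
  have s4: "qpoch_inf (c*q^(a+1)*u) q = qpoch (c*q^(a+1)*u) q b * qpoch_inf (q^(a+1)*u) q"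
  proof -
    have e: "c*q^(a+1)*u*q^b = q^(a+1)*u" using c by (simp add: field_simps)
    show ?thesis using qi_split[OF qn, of "c*q^(a+1)*u" b] unfolding e .
  qed
  define X1 where "X1 = qpoch_inf (c*q^a*u) q"
  define X4 where "X4 = qpoch_inf (q^(a+1)*u) q"
  define Y2 where "Y2 = qpoch_inf (q/t*u) q"
  define Y3 where "Y3 = qpoch_inf (t*q^a*u) q"
  define D1 where "D1 = qpoch (c*u) q a"
  define D4 where "D4 = qpoch (c*q^(a+1)*u) q b"
  have X1: "X1 \<noteq> 0" and D1: "D1 \<noteq> 0" using h1 s1 unfolding X1_def D1_def by auto
  have X4: "X4 \<noteq> 0" and D4: "D4 \<noteq> 0" using h4 s4 unfolding X4_def D4_def by auto
  have Y2: "Y2 \<noteq> 0" using h2 Y2_def by auto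
  have Y3: "Y3 \<noteq> 0" using h3 Y3_def by auto
  have "X1 = qpoch (c*q^a*u) q 1 * qpoch_inf (c*q^a*u*q^1) q"
    unfolding X1_def by (rule qi_split[OF qn])
  then have s0: "1 - c*q^a*u \<noteq> 0" using X1 by (auto simp: qpoch_def)
  have L: "?thesis \<longleftrightarrow> qpoch (c*q/t*u) q b * qpoch (t*u) q a / (D1 * D4)
     = (q^b - q^a*u)/(1-u) * (qpoch (t*u) q a / qpoch (q*u) q a) * (qpoch (t/u) q b / qpoch (q/u) q b) / t^b"
    unfolding s1 s2 s3 s4 X1_def[symmetric] X4_def[symmetric] Y2_def[symmetric] Y3_def[symmetric]
      D1_def[symmetric] D4_def[symmetric]
    using X1 X4 Y2 Y3 by (simp add: field_simps)
  define P where "P = (\<lambda>w. \<Prod>k<b. - w / q ^ k)"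
  have f1: "qpoch (c*q/t*u) q b = P (u/t) * qpoch (t/u) q b"
    using qpoch_refl[of "u/t" q b] u0 t0 q0 unfolding P_def cq by (simp add: field_simps)
  have f2: "qpoch (c*u) q b = P (u/q) * qpoch (q/u) q b"
    using qpoch_refl[of "u/q" q b] u0 t0 q0 unfolding P_def cq by (simp add: field_simps)
  have f3: "qpoch (c*u) q (a + (1 + b)) = D1 * ((1 - c*q^a*u) * D4)"
    unfolding qpoch_add D1_def D4_def by (simp add: qpoch_def mult_ac)
  have f4: "qpoch (c*u) q (b + (1 + a)) = qpoch (c*u) q b * ((1 - u) * qpoch (q*u) q a)"
  proof -
    have e: "c*u*q^b = u" using c by (simp add: field_simps)
    show ?thesis unfolding qpoch_add e by (simp add: qpoch_def mult_ac)
  qed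
  have f5: "P (u/t) * t^b = P u" "P (u/q) * q^b = P u"
    unfolding P_def using prodP t0 q0 by auto
  have Pu: "P u \<noteq> 0" unfolding P_def using u0 q0 by auto
  have key: "D1 * D4 * (1 - c*q^a*u) = P (u/q) * qpoch (q/u) q b * (1 - u) * qpoch (q*u) q a"
    using f3 f4 f2 by (simp add: ac_simps)
  have e: "q^b * (1 - c*q^a*u) = q^b - q^a*u"
    using c by (simp add: algebra_simps)
  have tb: "t^b \<noteq> 0" "q^b \<noteq> 0" using t0 q0 by auto
  have Pt: "P (u/t) = P u / t^b" "P (u/q) = P u / q^b" using f5 tb by (auto simp: field_simps)
  show ?thesis unfolding L f1
  proof -
    have DD: "D1 * D4 = P (u/q) * qpoch (q/u) q b * (1 - u) * qpoch (q*u) q a / (1 - c*q^a*u)"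
      using key s0 by (simp add: field_simps)
    show "P (u / t) * qpoch (t / u) q b * qpoch (t * u) q a / (D1 * D4) =
      (q ^ b - q ^ a * u) / (1 - u) * (qpoch (t * u) q a / qpoch (q * u) q a) * (qpoch (t / u) q b / qpoch (q / u) q b) / t ^ b"
      unfolding DD Pt e[symmetric] using Pu tb h5 h6 u1 s0
      by (simp add: field_simps)
  qed
qed

lemma pair_def:
  fixes Q T xi xj :: complex
  assumes q0: "Q \<noteq> 0" and qn: "norm Q < 1" and t0: "T \<noteq> 0" and xi: "xi \<noteq> 0" and xj: "xj \<noteq> 0"
    and xij: "xi \<noteq> xj"
    and h1: "qpoch_inf (Q powi (- int b) * xi / xj) Q \<noteq> 0"
    and h2: "qpoch_inf (Q / T * xi / xj) Q \<noteq> 0"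
    and h3: "qpoch_inf (T * Q ^ a * xi / xj) Q \<noteq> 0"
    and h4: "qpoch_inf (Q powi (1 + int a - int b) * xi / xj) Q \<noteq> 0"
    and h5: "qpoch (Q * xi / xj) Q a \<noteq> 0" and h6: "qpoch (Q * xj / xi) Q b \<noteq> 0"
  shows "qpoch_inf (Q powi (int a - int b) * xi / xj) Q
        * qpoch_inf (Q powi (1 - int b) / T * xi / xj) Q
        * qpoch_inf (T * xi / xj) Q
        * qpoch_inf (Q ^ (1 + a) * xi / xj) Q
      / (qpoch_inf (Q powi (- int b) * xi / xj) Q
        * qpoch_inf (Q / T * xi / xj) Q
        * qpoch_inf (T * Q ^ a * xi / xj) Q
        * qpoch_inf (Q powi (1 + int a - int b) * xi / xj) Q)
    = (Q ^ b * xj - Q ^ a * xi) / (xj - xi) *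
      ((qpoch (T * xi / xj) Q a / qpoch (Q * xi / xj) Q a) *
       (qpoch (T * xj / xi) Q b / qpoch (Q * xj / xi) Q b)) / T ^ b"
proof -
  define c where "c = Q powi (- int b)"
  define u where "u = xi / xj"
  have c1: "c * Q ^ b = 1" unfolding c_def using q0
    by (metis (no_types, opaque_lifting) add.commute add.right_inverse power_int_0_right power_int_add power_int_of_nat)
  have p1: "Q powi (int a - int b) = c * Q ^ a" unfolding c_def using q0
    by (metis add.commute diff_conv_add_uminus power_int_add power_int_of_nat)
  have p2: "Q powi (1 - int b) = c * Q" unfolding c_def using q0
    by (metis add.commute diff_conv_add_uminus power_int_add power_int_1_right)
  have p3: "Q powi (1 + int a - int b) = c * Q ^ (a + 1)" unfolding c_def using q0
    by (metis add.commute diff_conv_add_uminus power_int_add power_int_of_nat of_nat_Suc Suc_eq_plus1)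
  have u0: "u \<noteq> 0" and u1: "u \<noteq> 1" using xi xj xij unfolding u_def by auto
  have r: "Q powi (int a - int b) * xi / xj = c*Q^a*u" "Q powi (1 - int b) / T * xi / xj = c*Q/T*u"
     "T * xi / xj = T*u" "Q ^ (1 + a) * xi / xj = Q^(a+1)*u" "Q powi (- int b) * xi / xj = c*u"
     "Q / T * xi / xj = Q/T*u" "T * Q ^ a * xi / xj = T*Q^a*u" "Q powi (1 + int a - int b) * xi / xj = c*Q^(a+1)*u"
     "Q * xi / xj = Q*u" "Q * xj / xi = Q/u" "T * xj / xi = T/u"
    unfolding p1 p2 p3 u_def c_def[symmetric] using xi xj by (auto simp: field_simps)
  have v: "(Q ^ b * xj - Q ^ a * xi) / (xj - xi) = (Q^b - Q^a*u)/(1-u)"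
    unfolding u_def using xi xj xij by (simp add: field_simps)
  show ?thesis unfolding r v
    using pair_u[OF q0 qn t0 u0 u1 c1] h1 h2 h3 h4 h5 h6 unfolding r by (simp add: mult_ac)
qed

lemma pairs_fin: "finite (pairs_lt n)"
  by (rule finite_subset[of _ "{..<n} \<times> {..<n}"]) (auto simp: pairs_lt_def)

lemma pairs_Suc: "pairs_lt (Suc n) = pairs_lt n \<union> (\<lambda>i. (i, n)) ` {..<n}"
  by (auto simp: pairs_lt_def)

lemma prod_pairs_Suc:
  "(\<Prod>p\<in>pairs_lt (Suc n). f p) = (\<Prod>p\<in>pairs_lt n. f p) * (\<Prod>i<n. f (i, n))"
proof -
  have d: "pairs_lt n \<inter> (\<lambda>i. (i, n)) ` {..<n} = {}" by (auto simp: pairs_lt_def)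
  have "(\<Prod>p\<in>pairs_lt (Suc n). f p) = (\<Prod>p\<in>pairs_lt n. f p) * (\<Prod>p\<in>(\<lambda>i. (i, n)) ` {..<n}. f p)"
    unfolding pairs_Suc by (rule prod.union_disjoint[OF pairs_fin _ d]) auto
  also have "(\<Prod>p\<in>(\<lambda>i. (i, n)) ` {..<n}. f p) = (\<Prod>i<n. f (i, n))"
    by (subst prod.reindex) (auto simp: inj_on_def)
  finally show ?thesis .
qed

lemma prod_pairs_pow:
  fixes T :: complex
  shows "(\<Prod>(i, j)\<in>pairs_lt n. T ^ e j) = (\<Prod>j<n. T ^ (j * e j))"
proof (induction n)
  case 0 then show ?case by (simp add: pairs_lt_def)
next
  case (Suc n)
  have "(\<Prod>i<n. T ^ e n) = T ^ (n * e n)" by (simp add: power_mult[symmetric] mult.commute)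
  then show ?case using Suc by (simp add: prod_pairs_Suc)
qed

lemma prod_square:
  fixes R :: "nat \<Rightarrow> nat \<Rightarrow> complex"
  shows "(\<Prod>i<n. \<Prod>j<n. R i j) = (\<Prod>i<n. R i i) * (\<Prod>(i, j)\<in>pairs_lt n. R i j * R j i)"
proof (induction n)
  case 0 then show ?case by (simp add: pairs_lt_def)
next
  case (Suc n)
  have "(\<Prod>i<Suc n. \<Prod>j<Suc n. R i j) = (\<Prod>i<n. (\<Prod>j<n. R i j) * R i n) * ((\<Prod>j<n. R n j) * R n n)"
    by simp
  also have "\<dots> = (\<Prod>i<n. \<Prod>j<n. R i j) * (\<Prod>i<n. R i n) * (\<Prod>j<n. R n j) * R n n"
    by (simp add: prod.distrib mult_ac)
  also have "\<dots> = (\<Prod>i<Suc n. R i i) * (\<Prod>(i, j)\<in>pairs_lt (Suc n). R i j * R j i)"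
    unfolding Suc prod_pairs_Suc by (simp add: prod.distrib mult_ac)
  finally show ?case .
qed


lemma single:
  fixes q t :: real and a k :: nat
  assumes q: "0 < q" "q < 1" and t: "0 < t" "t < 1"
  shows "complex_of_real t ^ k * qpoch_inf (complex_of_real t) (complex_of_real q)
      * qpoch_inf (complex_of_real q ^ (a + 1)) (complex_of_real q)
      / (qpoch_inf (complex_of_real t * complex_of_real q ^ a) (complex_of_real q) * qpoch_inf (complex_of_real q) (complex_of_real q))
    = complex_of_real t ^ k * (qpoch (complex_of_real t) (complex_of_real q) a / qpoch (complex_of_real q) (complex_of_real q) a)"
proof -
  define Q where "Q = complex_of_real q"
  define T where "T = complex_of_real t"
  have qn: "norm Q < 1" using q unfolding Q_def by auto
  have lt1: "norm (z :: complex) < 1 \<Longrightarrow> z \<noteq> 1" for z by auto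
  have pq: "q ^ i \<le> 1" for i using q by (simp add: power_le_one)
  have n1: "qpoch_inf (T * Q ^ a) Q \<noteq> 0"
  proof (rule qi_nz[OF qn])
    fix i
    have "norm (T * Q ^ a * Q ^ i) = t * q ^ a * q ^ i" using q t unfolding T_def Q_def
      by (simp add: norm_mult norm_power)
    also have "\<dots> < 1"
    proof -
      have "q ^ a * q ^ i \<le> 1" by (rule mult_le_one[OF pq]) (use q pq in auto)
      then have "t * (q ^ a * q ^ i) \<le> t" by (rule mult_left_le) (use t in auto)
      then have "t * q ^ a * q ^ i \<le> t" by (simp only: mult.assoc)
      then show ?thesis using t by linarith
    qed
    finally show "T * Q ^ a * Q ^ i \<noteq> 1" by (rule lt1)
  qed
  have n2: "qpoch_inf (Q ^ (a + 1)) Q \<noteq> 0"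
  proof (rule qi_nz[OF qn])
    fix i
    have "norm (Q ^ (a + 1) * Q ^ i) = q ^ (a + 1 + i)" using q unfolding Q_def
      by (simp add: norm_mult norm_power power_add)
    also have "\<dots> < 1"
    proof -
      have "q * q ^ (a + i) \<le> q" by (rule mult_left_le[OF pq]) (use q in auto)
      moreover have "q ^ (a + 1 + i) = q * q ^ (a + i)" by (simp add: power_add)
      ultimately show ?thesis using q by linarith
    qed
    finally show "Q ^ (a + 1) * Q ^ i \<noteq> 1" by (rule lt1)
  qed
  have s1: "qpoch_inf T Q = qpoch T Q a * qpoch_inf (T * Q ^ a) Q" by (rule qi_split[OF qn])
  have s2: "qpoch_inf Q Q = qpoch Q Q a * qpoch_inf (Q ^ (a + 1)) Q"
    using qi_split[OF qn, of Q a] by (simp add: mult.commute)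
  have g: "\<And>K A B X Y :: complex. X \<noteq> 0 \<Longrightarrow> Y \<noteq> 0 \<Longrightarrow> K * (A * X) * Y / (X * (B * Y)) = K * (A / B)"
    by simp
  show ?thesis unfolding Q_def[symmetric] T_def[symmetric] s1 s2 using g[OF n1 n2] .
qed

theorem proposition3p8:
  fixes n :: nat and \<eta> :: "nat \<Rightarrow> nat" and x :: "nat \<Rightarrow> complex" and q t :: real
  assumes q: "0 < q" "q < 1" and t: "0 < t" "t < 1"
    and xnz: "\<And>i. i < n \<Longrightarrow> x i \<noteq> 0"
    and xdist: "\<And>i j. (i, j) \<in> pairs_lt n \<Longrightarrow> x i \<noteq> x j"
    and den1: "\<And>i j. (i, j) \<in> pairs_lt n \<Longrightarrow>
       qpoch_inf (complex_of_real q powi (- int (\<eta> j)) * x i / x j) (complex_of_real q) \<noteq> 0"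
    and den2: "\<And>i j. (i, j) \<in> pairs_lt n \<Longrightarrow>
       qpoch_inf (complex_of_real q / complex_of_real t * x i / x j) (complex_of_real q) \<noteq> 0"
    and den3: "\<And>i j. (i, j) \<in> pairs_lt n \<Longrightarrow>
       qpoch_inf (complex_of_real t * complex_of_real q ^ \<eta> i * x i / x j) (complex_of_real q) \<noteq> 0"
    and den4: "\<And>i j. (i, j) \<in> pairs_lt n \<Longrightarrow>
       qpoch_inf (complex_of_real q powi (1 + int (\<eta> i) - int (\<eta> j)) * x i / x j) (complex_of_real q) \<noteq> 0"
    and den5: "\<And>i j. i < n \<Longrightarrow> j < n \<Longrightarrow>
       qpoch (complex_of_real q * x i / x j) (complex_of_real q) (\<eta> i) \<noteq> 0"
  shows "h_eta n \<eta> x q t =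
    (\<Prod>(i, j)\<in>pairs_lt n.
        (complex_of_real q ^ \<eta> j * x j - complex_of_real q ^ \<eta> i * x i) / (x j - x i)) *
    (\<Prod>i<n. \<Prod>j<n.
        qpoch (complex_of_real t * x i / x j) (complex_of_real q) (\<eta> i)
      / qpoch (complex_of_real q * x i / x j) (complex_of_real q) (\<eta> i))"
proof -
  define Q where "Q = complex_of_real q"
  define T where "T = complex_of_real t"
  define R where "R = (\<lambda>i j. qpoch (T * x i / x j) Q (\<eta> i) / qpoch (Q * x i / x j) Q (\<eta> i))"
  define V where "V = (\<lambda>i j. (Q ^ \<eta> j * x j - Q ^ \<eta> i * x i) / (x j - x i))"
  have q0: "Q \<noteq> 0" and qn: "norm Q < 1" and t0: "T \<noteq> 0"
    using q t unfolding Q_def T_def by auto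
  have S: "(\<Prod>i<n. T ^ (i * \<eta> i) * qpoch_inf T Q * qpoch_inf (Q ^ (\<eta> i + 1)) Q
              / (qpoch_inf (T * Q ^ \<eta> i) Q * qpoch_inf Q Q))
         = (\<Prod>i<n. T ^ (i * \<eta> i) * R i i)"
  proof (rule prod.cong[OF refl])
    fix i assume "i \<in> {..<n}"
    then have "x i \<noteq> 0" using xnz by auto
    then have "R i i = qpoch T Q (\<eta> i) / qpoch Q Q (\<eta> i)" unfolding R_def by simp
    then show "T ^ (i * \<eta> i) * qpoch_inf T Q * qpoch_inf (Q ^ (\<eta> i + 1)) Q
              / (qpoch_inf (T * Q ^ \<eta> i) Q * qpoch_inf Q Q) = T ^ (i * \<eta> i) * R i i"
      using single[OF q t, of "i * \<eta> i" "\<eta> i"] unfolding Q_def T_def by simp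
  qed
  have P: "(\<Prod>(i, j)\<in>pairs_lt n.
        qpoch_inf (Q powi (int (\<eta> i) - int (\<eta> j)) * x i / x j) Q
        * qpoch_inf (Q powi (1 - int (\<eta> j)) / T * x i / x j) Q
        * qpoch_inf (T * x i / x j) Q
        * qpoch_inf (Q ^ (1 + \<eta> i) * x i / x j) Q
      / (qpoch_inf (Q powi (- int (\<eta> j)) * x i / x j) Q
        * qpoch_inf (Q / T * x i / x j) Q
        * qpoch_inf (T * Q ^ \<eta> i * x i / x j) Q
        * qpoch_inf (Q powi (1 + int (\<eta> i) - int (\<eta> j)) * x i / x j) Q))
     = (\<Prod>(i, j)\<in>pairs_lt n. V i j * (R i j * R j i) / T ^ \<eta> j)"
  proof (rule prod.cong[OF refl], clarify)
    fix i j assume ij: "(i, j) \<in> pairs_lt n"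
    then have ijn: "i < n" "j < n" by (auto simp: pairs_lt_def)
    show "qpoch_inf (Q powi (int (\<eta> i) - int (\<eta> j)) * x i / x j) Q
        * qpoch_inf (Q powi (1 - int (\<eta> j)) / T * x i / x j) Q
        * qpoch_inf (T * x i / x j) Q
        * qpoch_inf (Q ^ (1 + \<eta> i) * x i / x j) Q
      / (qpoch_inf (Q powi (- int (\<eta> j)) * x i / x j) Q
        * qpoch_inf (Q / T * x i / x j) Q
        * qpoch_inf (T * Q ^ \<eta> i * x i / x j) Q
        * qpoch_inf (Q powi (1 + int (\<eta> i) - int (\<eta> j)) * x i / x j) Q)
      = V i j * (R i j * R j i) / T ^ \<eta> j"
      unfolding V_def R_def
      by (rule pair_def[OF q0 qn t0 xnz[OF ijn(1)] xnz[OF ijn(2)] xdist[OF ij]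
            den1[OF ij, folded Q_def] den2[OF ij, folded Q_def T_def] den3[OF ij, folded Q_def T_def]
            den4[OF ij, folded Q_def] den5[OF ijn, folded Q_def] den5[OF ijn(2,1), folded Q_def]])
  qed
  have TT: "(\<Prod>(i, j)\<in>pairs_lt n. T ^ \<eta> j) = (\<Prod>i<n. T ^ (i * \<eta> i))"
    by (rule prod_pairs_pow)
  have Tnz: "(\<Prod>i<n. T ^ (i * \<eta> i)) \<noteq> 0" using t0 by simp
  have P2: "(\<Prod>(i, j)\<in>pairs_lt n. V i j * (R i j * R j i) / T ^ \<eta> j)
      = (\<Prod>(i, j)\<in>pairs_lt n. V i j) * (\<Prod>(i, j)\<in>pairs_lt n. R i j * R j i) / (\<Prod>i<n. T ^ (i * \<eta> i))"
    unfolding TT[symmetric] by (simp add: prod.distrib prod_dividef case_prod_beta)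
  have "h_eta n \<eta> x q t = (\<Prod>i<n. T ^ (i * \<eta> i) * R i i) *
      ((\<Prod>(i, j)\<in>pairs_lt n. V i j) * (\<Prod>(i, j)\<in>pairs_lt n. R i j * R j i) / (\<Prod>i<n. T ^ (i * \<eta> i)))"
    unfolding h_eta_def Let_def Q_def[symmetric] T_def[symmetric] S P P2 ..
  also have "\<dots> = (\<Prod>(i, j)\<in>pairs_lt n. V i j) * ((\<Prod>i<n. R i i) * (\<Prod>(i, j)\<in>pairs_lt n. R i j * R j i))"
  proof -
    have g: "\<And>B C D E :: complex. E \<noteq> 0 \<Longrightarrow> E * B * (C * D / E) = C * (B * D)"
      by simp
    show ?thesis unfolding prod.distrib using g[OF Tnz] .
  qed
  also have "\<dots> = (\<Prod>(i, j)\<in>pairs_lt n. V i j) * (\<Prod>i<n. \<Prod>j<n. R i j)"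
    by (simp add: prod_square)
  finally show ?thesis unfolding V_def R_def Q_def T_def .
qed

end
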